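(* For all positive real numbers $a,b,c$ and every integer $n\ge 1$, $$\sum_{k=1}^{n}\binom{n}{k}(ab+c)^{n-k}(ab+2c)^{k}\,a^{\xi(k)}\,(ab)^{\lfloor k/2\rfloor}\,c^{\,n-k}\,F_k^{(a,b,c)}=F_{4n}^{(a,b,c)}.$$
   Context: For positive real numbers $a,b,c$, the generalized Fibonacci numbers $F_m^{(a,b,c)}$ are defined by $F_0^{(a,b,c)}=0$, $F_1^{(a,b,c)}=1$, and for $m\ge 2$: $F_m^{(a,b,c)}=a\,F_{m-1}^{(a,b,c)}+c\,F_{m-2}^{(a,b,c)}$ if $m$ is even, and $F_m^{(a,b,c)}=b\,F_{m-1}^{(a,b,c)}+c\,F_{m-2}^{(a,b,c)}$ if $m$ is odd. For an integer $k$, $\lfloor k/2\rfloor$ denotes the floor of $k/2$ and $\xi(k):=k-2\lfloor k/2\rfloor$. *)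

theory Defs
  imports Complex_Main
begin

fun gfib :: "real \<Rightarrow> real \<Rightarrow> real \<Rightarrow> nat \<Rightarrow> real" where
  "gfib a b c 0 = 0"
| "gfib a b c (Suc 0) = 1"
| "gfib a b c (Suc (Suc m)) =
     (if even (Suc (Suc m)) then a else b) * gfib a b c (Suc m) + c * gfib a b c m"

definition xi :: "int \<Rightarrow> int" where
  "xi k = k - 2 * \<lfloor>real_of_int k / 2\<rfloor>"

end

theory Submission
  imports Defs
begin

lemma pascal_sum:
  fixes u v :: real and g :: "nat \<Rightarrow> real"
  shows "(\<Sum>k\<le>Suc n. real (Suc n choose k) * u^(Suc n - k) * v^k * g k)
       = (\<Sum>k\<le>n. real (n choose k) * u^(n - k) * v^k * (v * g (Suc k) + u * g k))"
proof -
  define h where "h k = real (n choose k) * u^(Suc n - k) * v^k * g k" for k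
  have A: "(\<Sum>k\<le>Suc n. real (Suc n choose k) * u^(Suc n - k) * v^k * g k)
     = (\<Sum>j\<le>n. real (Suc n choose Suc j) * u^(Suc n - Suc j) * v^(Suc j) * g (Suc j)) + u^(Suc n) * g 0"
    by (subst sum.atMost_Suc_shift) simp
  have B: "(\<Sum>j\<le>n. real (Suc n choose Suc j) * u^(Suc n - Suc j) * v^(Suc j) * g (Suc j))
     = (\<Sum>j\<le>n. real (n choose j) * u^(n - j) * v^(Suc j) * g (Suc j)) + (\<Sum>j\<le>n. h (Suc j))"
    by (simp add: h_def sum.distrib[symmetric] algebra_simps)
  have C: "(\<Sum>j\<le>n. h (Suc j)) + u^(Suc n) * g 0 = (\<Sum>k\<le>n. h k)"
  proof -
    have "(\<Sum>j\<le>n. h (Suc j)) + h 0 = (\<Sum>k\<le>Suc n. h k)"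
      by (subst sum.atMost_Suc_shift) simp
    also have "\<dots> = (\<Sum>k\<le>n. h k)" by (simp add: h_def)
    finally show ?thesis by (simp add: h_def)
  qed
  have D: "(\<Sum>k\<le>n. real (n choose k) * u^(n - k) * v^k * (v * g (Suc k) + u * g k))
     = (\<Sum>j\<le>n. real (n choose j) * u^(n - j) * v^(Suc j) * g (Suc j)) + (\<Sum>k\<le>n. h k)"
    unfolding h_def sum.distrib[symmetric]
    by (rule sum.cong) (auto simp: algebra_simps Suc_diff_le)
  show ?thesis using A B C D by simp
qed

definition G :: "real \<Rightarrow> real \<Rightarrow> real \<Rightarrow> nat \<Rightarrow> real" where
  "G a b c k = (if even k then 1 else a) * (a*b)^(k div 2) * gfib a b c k"

lemma G_rec: "G a b c (Suc (Suc k)) = (a*b) * G a b c (Suc k) + (a*b)*c * G a b c k"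
proof (cases "even k")
  case True
  then obtain j where k: "k = 2*j" by auto
  have "Suc k div 2 = j" "Suc (Suc k) div 2 = Suc j" "k div 2 = j" using k by auto
  then show ?thesis using True unfolding G_def by (simp add: algebra_simps)
next
  case False
  then obtain j where k: "k = 2*j+1" using oddE by blast
  have "Suc k div 2 = Suc j" "Suc (Suc k) div 2 = Suc j" "k div 2 = j" using k by auto
  then show ?thesis using False unfolding G_def by (simp add: algebra_simps)
qed

lemma G4: "G a b c (Suc (Suc (Suc (Suc m)))) =
   (a*b)^2 * ((a*b+2*c) * G a b c (Suc m) + c*(a*b+c) * G a b c m)"
  by (simp add: G_rec algebra_simps power2_eq_square)

lemma main_ind:
  "G a b c (m + 4*n) = (a*b)^(2*n) *
     (\<Sum>k\<le>n. real (n choose k) * (c*(a*b+c))^(n - k) * (a*b+2*c)^k * G a b c (m + k))"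
proof (induction n arbitrary: m)
  case 0
  then show ?case by simp
next
  case (Suc n)
  have "m + 4 * Suc n = Suc (Suc (Suc (Suc (m + 4*n))))" by simp
  then have "G a b c (m + 4 * Suc n) = (a*b)^2 * ((a*b+2*c) * G a b c (Suc m + 4*n) + c*(a*b+c) * G a b c (m + 4*n))"
    by (metis G4 add_Suc)
  also have "\<dots> = (a*b)^(2 * Suc n) *
     (\<Sum>k\<le>n. real (n choose k) * (c*(a*b+c))^(n - k) * (a*b+2*c)^k *
        ((a*b+2*c) * G a b c (m + Suc k) + c*(a*b+c) * G a b c (m + k)))"
  proof -
    let ?u = "c*(a*b+c)" and ?v = "a*b+2*c" and ?P = "(a*b)^(2*n)"
    have e: "(\<Sum>k\<le>n. real (n choose k) * ?u^(n - k) * ?v^k * (?v * G a b c (m + Suc k) + ?u * G a b c (m + k)))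
      = ?v * (\<Sum>k\<le>n. real (n choose k) * ?u^(n - k) * ?v^k * G a b c (Suc m + k))
        + ?u * (\<Sum>k\<le>n. real (n choose k) * ?u^(n - k) * ?v^k * G a b c (m + k))"
      by (simp add: sum_distrib_left sum.distrib[symmetric] algebra_simps)
    have p: "(a*b)^(2 * Suc n) = (a*b)^2 * ?P" by (simp add: power_add[symmetric])
    show ?thesis unfolding Suc.IH[of "Suc m"] Suc.IH[of m] e p by (simp add: algebra_simps)
  qed
  also have "\<dots> = (a*b)^(2 * Suc n) *
     (\<Sum>k\<le>Suc n. real (Suc n choose k) * (c*(a*b+c))^(Suc n - k) * (a*b+2*c)^k * G a b c (m + k))"
    using pascal_sum[where u="c*(a*b+c)" and v="a*b+2*c" and g="\<lambda>k. G a b c (m+k)" and n=n] by simp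
  finally show ?case .
qed

theorem lemma1:
  fixes a b c :: real and n :: nat
  assumes "a > 0" and "b > 0" and "c > 0" and "n \<ge> 1"
  shows "(\<Sum>k=1..n. real (n choose k) * (a*b + c) ^ (n - k) * (a*b + 2*c) ^ k
            * a ^ nat (xi (int k)) * (a*b) ^ nat \<lfloor>real k / 2\<rfloor> * c ^ (n - k)
            * gfib a b c k) = gfib a b c (4*n)"
proof -
  have xi: "a ^ nat (xi (int k)) = (if even k then 1 else a)" for k :: nat
  proof -
    have "\<lfloor>real_of_int (int k) / 2\<rfloor> = int (k div 2)" by linarith
    then have "xi (int k) = int (k mod 2)" unfolding xi_def by (simp add: of_nat_mod zmod_int) (metis minus_mult_div_eq_mod of_nat_mod of_nat_mult mult.commute of_nat_numeral zdiv_int)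
    then show ?thesis by (auto simp: mod_2_eq_odd)
  qed
  have fl: "nat \<lfloor>real k / 2\<rfloor> = k div 2" for k :: nat by linarith
  have trm: "real (n choose k) * (a*b + c) ^ (n - k) * (a*b + 2*c) ^ k
            * a ^ nat (xi (int k)) * (a*b) ^ nat \<lfloor>real k / 2\<rfloor> * c ^ (n - k)
            * gfib a b c k = real (n choose k) * (c*(a*b+c))^(n - k) * (a*b+2*c)^k * G a b c (0 + k)" for k
    unfolding xi fl G_def power_mult_distrib by (simp add: ac_simps)
  have s: "(\<Sum>k\<le>n. real (n choose k) * (c*(a*b+c))^(n - k) * (a*b+2*c)^k * G a b c (0 + k))
     = (\<Sum>k=1..n. real (n choose k) * (c*(a*b+c))^(n - k) * (a*b+2*c)^k * G a b c (0 + k))"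
  proof -
    have "{..n} = insert 0 {1..n}" by auto
    then show ?thesis by (simp add: G_def)
  qed
  have g4: "G a b c (0 + 4*n) = (a*b)^(2*n) * gfib a b c (4*n)" unfolding G_def by simp
  have pos: "(a*b)^(2*n) \<noteq> 0" using assms by simp
  have "(a*b)^(2*n) * (\<Sum>k=1..n. real (n choose k) * (c*(a*b+c))^(n - k) * (a*b+2*c)^k * G a b c (0 + k))
      = (a*b)^(2*n) * gfib a b c (4*n)"
    using main_ind[of a b c 0 n] g4 s by simp
  then have "(\<Sum>k=1..n. real (n choose k) * (c*(a*b+c))^(n - k) * (a*b+2*c)^k * G a b c (0 + k))
      = gfib a b c (4*n)" using pos assms(1,2) by auto
  then show ?thesis by (simp only: trm)
qed

end
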